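(* Let $N\ge 1$ be an integer and $h,g>0$ real numbers. For $k\in\{0,1,\dots,N\}$ and $\Delta>0$ define $$R_k(\Delta):=\log\Big(1+(N-k)\frac{h^2}{1+\Delta}\Big)+\log(1+kg^2)-k\log\Big(\frac{1+\Delta}{\Delta}\Big)$$ (logarithms base $2$). Then for all $i,j\in\{0,\dots,N\}$ with $i\neq j$ there exists exactly one $\Delta=\Delta^*_{ij}>0$ with $R_i(\Delta)=R_j(\Delta)$.
   Context: $R_k(\Delta)$ is the quantize-map-and-forward rate of a cut containing $k$ relays in the symmetric $N$-relay diamond network (all source-relay magnitudes equal $h$, all relay-destination magnitudes equal $g$) when every relay uses Gaussian quantization distortion $\Delta$. *)

theory Defs
  imports Complex_Main
begin

text \<open>QMF rate of a cut containing k relays in the symmetric N-relay diamond network,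
  with Gaussian quantization distortion Delta; logarithms base 2.\<close>
definition qmf_rate :: "nat \<Rightarrow> real \<Rightarrow> real \<Rightarrow> nat \<Rightarrow> real \<Rightarrow> real" where
  "qmf_rate N h g k \<Delta> =
     log 2 (1 + (real N - real k) * (h^2 / (1 + \<Delta>)))
     + log 2 (1 + real k * g^2)
     - real k * log 2 ((1 + \<Delta>) / \<Delta>)"

end

theory Submission
  imports Defs
begin

lemma mono_part:
  fixes N i j :: nat and h g :: real
  assumes "h > 0" "g > 0" "i < j" "j \<le> N" "0 < D1" "D1 < D2"
  shows "qmf_rate N h g i D1 - qmf_rate N h g j D1 > qmf_rate N h g i D2 - qmf_rate N h g j D2"
proof -
  define p where "p = real N - real i"
  define q where "q = real N - real j"
  define a1 where "a1 = h^2/(1+D1)"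
  define a2 where "a2 = h^2/(1+D2)"
  have pq: "p > q" "q \<ge> 0" using assms unfolding p_def q_def by auto
  have a: "a1 > a2" "a2 > 0" unfolding a1_def a2_def using assms
    by (auto intro!: divide_strict_left_mono mult_pos_pos)
  have pa: "1 + p*a1 > 0" "1 + q*a1 > 0" "1 + p*a2 > 0" "1 + q*a2 > 0"
    using pq a by (auto intro!: add_pos_nonneg)
  have cross: "(1+p*a2)*(1+q*a1) \<le> (1+p*a1)*(1+q*a2)"
  proof -
    have "(1+p*a1)*(1+q*a2) - (1+p*a2)*(1+q*a1) = (p-q)*(a1-a2)" by (simp add: algebra_simps)
    also have "\<dots> \<ge> 0" using pq a by simp
    finally show ?thesis by simp
  qed
  have t1: "log 2 (1+p*a2) + log 2 (1+q*a1) \<le> log 2 (1+p*a1) + log 2 (1+q*a2)"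
  proof -
    have "log 2 ((1+p*a2)*(1+q*a1)) \<le> log 2 ((1+p*a1)*(1+q*a2))"
      using cross pa by (subst log_le_cancel_iff) auto
    thus ?thesis using pa by (simp add: log_mult)
  qed
  have r: "(1+D2)/D2 < (1+D1)/D1" using assms by (simp add: field_simps)
  have t3: "log 2 ((1+D2)/D2) < log 2 ((1+D1)/D1)" using r assms by simp
  have kk: "real j - real i > 0" using assms by simp
  have t3': "(real j - real i) * log 2 ((1+D2)/D2) < (real j - real i) * log 2 ((1+D1)/D1)"
    using t3 kk by simp
  show ?thesis using t1 t3'
    unfolding qmf_rate_def p_def[symmetric] q_def[symmetric] a1_def[symmetric] a2_def[symmetric]
    by (simp add: algebra_simps)
qed

lemma lim_part:
  fixes N i j :: nat and h g :: real
  shows "((\<lambda>D. qmf_rate N h g i D - qmf_rate N h g j D) \<longlongrightarrow>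
     log 2 (1 + real i * g^2) - log 2 (1 + real j * g^2)) at_top"
proof -
  have a: "((\<lambda>D::real. h^2/(1+D)) \<longlongrightarrow> 0) at_top"
    by (intro tendsto_divide_0[OF tendsto_const] filterlim_at_top_imp_at_infinity filterlim_tendsto_add_at_top[OF tendsto_const filterlim_ident])
  have b: "((\<lambda>D::real. (1+D)/D) \<longlongrightarrow> 1) at_top"
  proof -
    have "((\<lambda>D::real. 1/D + 1) \<longlongrightarrow> 0 + 1) at_top"
      by (intro tendsto_intros tendsto_divide_0[OF tendsto_const] filterlim_at_top_imp_at_infinity filterlim_ident)
    moreover have "eventually (\<lambda>D::real. 1/D + 1 = (1+D)/D) at_top"
      using eventually_gt_at_top[of 0] by eventually_elim (simp add: field_simps)
    ultimately show ?thesis using tendsto_cong by fastforce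
  qed
  have "((\<lambda>D. log 2 (1 + (real N - real i) * (h^2/(1+D))) + log 2 (1 + real i * g^2)
       - real i * log 2 ((1+D)/D) - (log 2 (1 + (real N - real j) * (h^2/(1+D))) + log 2 (1 + real j * g^2)
       - real j * log 2 ((1+D)/D))) \<longlongrightarrow>
     log 2 (1 + (real N - real i) * 0) + log 2 (1 + real i * g^2)
       - real i * log 2 1 - (log 2 (1 + (real N - real j) * 0) + log 2 (1 + real j * g^2)
       - real j * log 2 1)) at_top"
    by (intro tendsto_intros a b) (auto simp: add_pos_nonneg)
  thus ?thesis unfolding qmf_rate_def by simp
qed

lemma main_lt:
  fixes N i j :: nat and h g :: real
  assumes "h > 0" "g > 0" "i < j" "j \<le> N"
  shows "\<exists>!\<Delta>::real. \<Delta> > 0 \<and> qmf_rate N h g i \<Delta> = qmf_rate N h g j \<Delta>"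
proof -
  define F where "F D = qmf_rate N h g i D - qmf_rate N h g j D" for D
  define C where "C = log 2 (1 + real j * g^2) - log 2 (1 + real i * g^2)"
  have Cpos: "C > 0" unfolding C_def using assms by (simp add: add_pos_nonneg)
  define D0 where "D0 = 2 powr (-(C+1))"
  have D0pos: "D0 > 0" unfolding D0_def by simp
  have FD0: "F D0 > 0"
  proof -
    define p where "p = real N - real i"
    define q where "q = real N - real j"
    define a where "a = h^2/(1+D0)"
    have pq: "p \<ge> q" "q \<ge> 0" using assms unfolding p_def q_def by auto
    have apos: "a > 0" unfolding a_def using assms D0pos by simp
    have "q*a \<le> p*a" using pq apos by (simp add: mult_right_mono)
    hence t1: "log 2 (1+q*a) \<le> log 2 (1+p*a)" using pq apos by (simp add: add_pos_nonneg)
    define L where "L = log 2 ((1+D0)/D0)"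
    have "log 2 (1/D0) = C+1" unfolding D0_def by (simp add: log_divide log_powr_cancel)
    moreover have "log 2 (1/D0) < L" unfolding L_def using D0pos by (simp add: divide_strict_right_mono)
    ultimately have L: "L > C + 1" by simp
    have "(real j - real i) * L \<ge> 1 * L" using assms L Cpos
      by (intro mult_right_mono) auto
    hence "(real j - real i) * L > C + 1" using L by simp
    moreover have "F D0 = log 2 (1+p*a) - log 2 (1+q*a) - C + (real j - real i) * L"
      unfolding F_def qmf_rate_def C_def L_def p_def q_def a_def by (simp add: algebra_simps)
    ultimately show ?thesis using t1 by simp
  qed
  have "eventually (\<lambda>D. F D < 0) at_top"
  proof -
    have "(F \<longlongrightarrow> -C) at_top" using lim_part[of N h g i j] unfolding F_def C_def by simp
    moreover have "-C < 0" using Cpos by simp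
    ultimately show ?thesis by (rule order_tendstoD(2))
  qed
  moreover have "eventually (\<lambda>D. D > D0) at_top" by (rule eventually_gt_at_top)
  ultimately have "eventually (\<lambda>D. F D < 0 \<and> D > D0) at_top" by eventually_elim auto
  then obtain b where b: "F b < 0" "b > D0" using eventually_happens by fastforce
  have pos: "1 + (real N - real k) * (h^2/(1+x)) > 0" if "k \<le> N" "x > 0" for k x
    using that by (intro add_pos_nonneg) auto
  have cont: "continuous_on {D0..b} F"
    unfolding F_def qmf_rate_def using D0pos assms pos[of i] pos[of j]
  proof (intro continuous_intros ballI)
    fix x assume "x \<in> {D0..b}"
    hence x0: "x > 0" using D0pos by simp
    show "1 + x \<noteq> 0" "x \<noteq> 0" using x0 by auto
    show "1 + (real N - real i) * (h^2/(1+x)) \<noteq> 0" using pos[of i x] x0 assms by simp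
    show "1 + (real N - real j) * (h^2/(1+x)) \<noteq> 0" using pos[of j x] x0 assms by simp
    show "(1 + x) / x \<noteq> 0" using x0 by simp
  qed auto
  obtain x where x: "D0 \<le> x" "x \<le> b" "F x = 0"
    using IVT2'[of F b 0 D0, OF _ _ _ cont] b FD0 by auto
  have ex: "x > 0 \<and> qmf_rate N h g i x = qmf_rate N h g j x"
    using x D0pos unfolding F_def by simp
  show ?thesis
  proof (rule ex1I[of _ x])
    show "x > 0 \<and> qmf_rate N h g i x = qmf_rate N h g j x" by (rule ex)
  next
    fix y assume y: "y > 0 \<and> qmf_rate N h g i y = qmf_rate N h g j y"
    show "y = x"
    proof (rule ccontr)
      assume "y \<noteq> x"
      hence "y < x \<or> x < y" by auto
      thus False using mono_part[OF assms(1,2,3,4), of y x] mono_part[OF assms(1,2,3,4), of x y] ex y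
        by auto
    qed
  qed
qed

theorem lemma2:
  fixes N i j :: nat and h g :: real
  assumes "N \<ge> 1" and "h > 0" and "g > 0"
    and "i \<le> N" and "j \<le> N" and "i \<noteq> j"
  shows "\<exists>!\<Delta>::real. \<Delta> > 0 \<and> qmf_rate N h g i \<Delta> = qmf_rate N h g j \<Delta>"
proof (cases "i < j")
  case True
  then show ?thesis using main_lt[OF assms(2,3) True assms(5)] by simp
next
  case False
  hence "j < i" using assms(6) by simp
  from main_lt[OF assms(2,3) this assms(4)] show ?thesis by (simp add: eq_commute)
qed

end
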